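(* Let $k\in\{1,2,4\}$, let $\mu:X\times Y\to Z$ be an isometric bilinear map of Euclidean spaces with $0<\dim X\le\dim Y=\dim Z=k$, let $\mathbb A$ be the normed division algebra of dimension $k$ ($\mathbb R$, $\mathbb C$ or $\mathbb H$), and let $W\subset\mathbb A$ be a real subspace with $\dim W=\dim X$. (a) There exist linear isometries $\varphi_X:X\to W$, $\varphi_Y:Y\to\mathbb A$, $\varphi_Z:Z\to\mathbb A$ with $\varphi_Z(\mu(x,y))=\varphi_X(x)\varphi_Y(y)$ for all $x\in X,y\in Y$. (b) If moreover $1\in W$, then for any unit vectors $e_X\in X$, $e_Y\in Y$ such isometries can be chosen with additionally $\varphi_X(e_X)=1$ and $\varphi_Y(e_Y)=1$.
   Context: A bilinear map $\mu:X\times Y\to Z$ of finite-dimensional real Euclidean spaces is isometric if $|\mu(x,y)|=|x|\,|y|$ for all $x,y$. $\mathbb R,\mathbb C,\mathbb H$ carry their standard Euclidean norms and multiplications. *)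

theory Defs
  imports "HOL-Analysis.Analysis"
begin

definition isometric_bilinear :: "('x::real_normed_vector \<Rightarrow> 'y::real_normed_vector \<Rightarrow> 'z::real_normed_vector) \<Rightarrow> bool" where
  "isometric_bilinear \<mu> \<longleftrightarrow> bilinear \<mu> \<and> (\<forall>x y. norm (\<mu> x y) = norm x * norm y)"

definition lin_isometry :: "('a::real_normed_vector \<Rightarrow> 'b::real_normed_vector) \<Rightarrow> bool" where
  "lin_isometry f \<longleftrightarrow> linear f \<and> (\<forall>x. norm (f x) = norm x)"

text \<open>The quaternions H, realised via Cayley-Dickson as pairs of complex numbers
  (a,b) = a + b j, with the standard Euclidean norm of complex \<times> complex
  (= sqrt(|a|^2+|b|^2)) and the quaternion product.\<close>

type_synonym quat = "complex \<times> complex"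

definition qmult :: "quat \<Rightarrow> quat \<Rightarrow> quat" where
  "qmult p q = (fst p * fst q - cnj (snd q) * snd p, snd q * fst p + snd p * cnj (fst q))"

definition qone :: quat where
  "qone = (1, 0)"

definition factorizes_through ::
  "('a::real_normed_vector \<Rightarrow> 'a \<Rightarrow> 'a) \<Rightarrow> ('x::real_normed_vector \<Rightarrow> 'y::real_normed_vector \<Rightarrow> 'z::real_normed_vector)
   \<Rightarrow> 'a set \<Rightarrow> bool" where
  "factorizes_through m \<mu> W \<longleftrightarrow>
     (\<exists>\<phi>X \<phi>Y \<phi>Z. lin_isometry \<phi>X \<and> range \<phi>X \<subseteq> W \<and> lin_isometry \<phi>Y \<and> lin_isometry \<phi>Z \<and>
        (\<forall>x y. \<phi>Z (\<mu> x y) = m (\<phi>X x) (\<phi>Y y)))"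

definition factorizes_through_normalized ::
  "('a::real_normed_vector \<Rightarrow> 'a \<Rightarrow> 'a) \<Rightarrow> 'a \<Rightarrow> ('x::real_normed_vector \<Rightarrow> 'y::real_normed_vector \<Rightarrow> 'z::real_normed_vector)
   \<Rightarrow> 'a set \<Rightarrow> bool" where
  "factorizes_through_normalized m e \<mu> W \<longleftrightarrow>
     (\<forall>eX eY. norm eX = 1 \<and> norm eY = 1 \<longrightarrow>
       (\<exists>\<phi>X \<phi>Y \<phi>Z. lin_isometry \<phi>X \<and> range \<phi>X \<subseteq> W \<and> lin_isometry \<phi>Y \<and> lin_isometry \<phi>Z \<and>
          (\<forall>x y. \<phi>Z (\<mu> x y) = m (\<phi>X x) (\<phi>Y y)) \<and> \<phi>X eX = e \<and> \<phi>Y eY = e))"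

end

theory Submission
  imports Defs
begin


lemma cinner: "inner (Complex a b) (Complex c d) = a*c+b*d" by (simp add: inner_complex_def)

lemma qmult_expand: "qmult (Complex a1 a2, Complex b1 b2) (Complex c1 c2, Complex d1 d2) =
  (Complex (a1*c1 - a2*c2 - d1*b1 - d2*b2) (a1*c2 + a2*c1 - d1*b2 + d2*b1),
   Complex (d1*a1 - d2*a2 + b1*c1 + b2*c2) (d1*a2 + d2*a1 + b2*c1 - b1*c2))"
  by (simp add: qmult_def complex_eq_iff)

lemma quat_cases: obtains a1 a2 b1 b2 where "p = (Complex a1 a2, Complex b1 b2)"
  by (metis complex.exhaust prod.exhaust)

lemma qinner: "inner (Complex a1 a2, Complex b1 b2) (Complex c1 c2, Complex d1 d2) = a1*c1+a2*c2+b1*d1+b2*d2"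
  by (simp add: cinner)

lemma qone_expand: "qone = (Complex 1 0, Complex 0 0)" by (simp add: qone_def complex_eq_iff)

lemma qmult_assoc: "qmult (qmult p q) r = qmult p (qmult q r)"
  apply (cases p rule: quat_cases, cases q rule: quat_cases, cases r rule: quat_cases)
  by (simp add: qmult_expand complex_eq_iff algebra_simps)

lemma qinner_mult: "inner (qmult p q) (qmult p q) = inner p p * inner q q"
  apply (cases p rule: quat_cases, cases q rule: quat_cases)
  by (simp add: qmult_expand cinner algebra_simps)

lemma qone_left: "qmult qone p = p" and qone_right: "qmult p qone = p"
  by (simp_all add: qmult_def qone_def)

lemma qsq: assumes "inner w qone = 0" "inner w w = 1" shows "qmult w w = - qone"
  using assms apply (cases w rule: quat_cases)
  by (simp add: qmult_expand cinner qone_expand complex_eq_iff)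

lemma qanti: assumes "inner w qone = 0" "inner v qone = 0" "inner w v = 0" shows "qmult v w = - qmult w v"
  using assms apply (cases w rule: quat_cases, cases v rule: quat_cases)
  by (simp add: qmult_expand cinner qone_expand complex_eq_iff algebra_simps)

lemma qprod_orth0: assumes "inner w qone = 0" "inner v qone = 0" "inner w v = 0"
  shows "inner (qmult w v) qone = 0"
  using assms apply (cases w rule: quat_cases, cases v rule: quat_cases)
  by (simp add: qmult_expand cinner qone_expand complex_eq_iff algebra_simps)

lemma qprod_orth1: assumes "inner w qone = 0" "inner v qone = 0" "inner w v = 0"
  shows "inner (qmult w v) w = 0"
  using assms apply (cases w rule: quat_cases, cases v rule: quat_cases)
  by (simp add: qmult_expand cinner qone_expand complex_eq_iff algebra_simps)

lemma qprod_orth2: assumes "inner w qone = 0" "inner v qone = 0" "inner w v = 0"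
  shows "inner (qmult w v) v = 0"
  using assms apply (cases w rule: quat_cases, cases v rule: quat_cases)
  by (simp add: qmult_expand cinner qone_expand complex_eq_iff algebra_simps)

lemma qmult_bilinear: "bilinear qmult"
  unfolding bilinear_def
  by (auto intro!: linearI simp: qmult_def algebra_simps scaleR_conv_of_real)

lemma qnorm_mult: "norm (qmult p q) = norm p * norm q"
  by (simp add: norm_eq_sqrt_inner qinner_mult real_sqrt_mult)

lemma qinner_one_one: "inner qone qone = 1" by (simp add: qone_def)

lemma qmult_neg_left: "qmult (- p) q = - qmult p q" and qmult_neg_right: "qmult p (- q) = - qmult p q"
  by (simp_all add: qmult_def algebra_simps)

lemma qmult_scale_left: "qmult (c *\<^sub>R p) q = c *\<^sub>R qmult p q" and qmult_scale_right: "qmult p (c *\<^sub>R q) = c *\<^sub>R qmult p q"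
  using bilinear_lmul[OF qmult_bilinear] bilinear_rmul[OF qmult_bilinear] by auto

lemma qright_inv: assumes "norm a = 1" shows "\<exists>a'. qmult a a' = qone"
proof -
  have "qmult a (cnj (fst a), - snd a) = qone"
    using assms apply (cases a rule: quat_cases)
    by (simp add: complex_cnj complex_minus qmult_expand qone_expand complex_eq_iff norm_prod_def cmod_def power2_eq_square algebra_simps)
  then show ?thesis by blast
qed

lemma qsq_left: assumes "inner w qone = 0" "inner w w = 1" shows "qmult w (qmult w c) = - c"
  by (simp add: qmult_assoc[symmetric] qsq[OF assms] qmult_neg_left qone_left)

lemma qanti_left: assumes "inner w qone = 0" "inner v qone = 0" "inner w v = 0"
  shows "qmult v (qmult w c) = - qmult w (qmult v c)"
  by (simp add: qmult_assoc[symmetric] qanti[OF assms] qmult_neg_left)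

lemma dim_le2: "dim {a, b} \<le> 2"
proof -
  have "dim {a,b} \<le> card {a,b}" by (rule dim_le_card) (auto intro: span_base)
  also have "\<dots> \<le> 2" by (simp add: card_insert_if)
  finally show ?thesis .
qed

lemma dim_le3: "dim {a, b, c} \<le> 3"
proof -
  have "dim {a,b,c} \<le> card {a,b,c}" by (rule dim_le_card) (auto intro: span_base)
  also have "\<dots> \<le> 3" by (simp add: card_insert_if)
  finally show ?thesis .
qed



lemma inner_ext: fixes a b :: "'a::real_inner"
  assumes "\<And>z. inner a z = inner b z" shows "a = b"
proof -
  have "inner (a - b) (a - b) = 0" using assms[of "a-b"] by (simp add: inner_diff_left)
  then show ?thesis by simp
qed

lemma ib_P2:
  assumes "isometric_bilinear \<mu>"
  shows "inner (\<mu> x y) (\<mu> x y') = (norm x)^2 * inner y y'"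
proof -
  have b: "bilinear \<mu>" and n: "\<And>x y. norm (\<mu> x y) = norm x * norm y"
    using assms by (auto simp: isometric_bilinear_def)
  have sq: "inner (\<mu> x u) (\<mu> x u) = (norm x)^2 * inner u u" for u
    using n[of x u] by (metis power2_norm_eq_inner power_mult_distrib)
  have "inner (\<mu> x (y+y')) (\<mu> x (y+y')) = (norm x)^2 * inner (y+y') (y+y')" by (rule sq)
  then have "inner (\<mu> x y + \<mu> x y') (\<mu> x y + \<mu> x y') = (norm x)^2 * inner (y+y') (y+y')"
    by (simp add: bilinear_radd[OF b])
  then show ?thesis using sq[of y] sq[of y']
    by (simp add: inner_add_left inner_add_right inner_commute algebra_simps)
qed

lemma ib_P3:
  assumes "isometric_bilinear \<mu>"
  shows "inner (\<mu> x y) (\<mu> x' y') + inner (\<mu> x' y) (\<mu> x y') = 2 * inner x x' * inner y y'"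
proof -
  have b: "bilinear \<mu>" using assms by (auto simp: isometric_bilinear_def)
  have "inner (\<mu> (x+x') y) (\<mu> (x+x') y') = (norm (x+x'))^2 * inner y y'" by (rule ib_P2[OF assms])
  then have "inner (\<mu> x y + \<mu> x' y) (\<mu> x y' + \<mu> x' y') = inner (x+x') (x+x') * inner y y'"
    by (simp add: bilinear_ladd[OF b] power2_norm_eq_inner)
  then show ?thesis using ib_P2[OF assms, of x y y'] ib_P2[OF assms, of x' y y']
    by (simp add: inner_add_left inner_add_right inner_commute algebra_simps power2_norm_eq_inner)
qed

lemma orthonormal_span:
  fixes S :: "'a::euclidean_space set"
  assumes "pairwise orthogonal S" "\<And>x. x \<in> S \<Longrightarrow> norm x = 1" "card S = DIM('a)"
  shows "span S = UNIV"
proof -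
  have "0 \<notin> S" using assms(2) by force
  then have "independent S" using assms(1) pairwise_orthogonal_independent by blast
  then have "dim S = card S" by (rule dim_eq_card_independent)
  then show ?thesis using assms(3) dim_eq_full by auto
qed

lemma sum_orthonormal_sq:
  fixes g :: "'b \<Rightarrow> 'a::real_inner"
  assumes "finite S" "\<And>b b'. b \<in> S \<Longrightarrow> b' \<in> S \<Longrightarrow> inner (g b) (g b') = (if b = b' then 1 else 0)"
  shows "inner (\<Sum>b\<in>S. c b *\<^sub>R g b) (\<Sum>b\<in>S. c b *\<^sub>R g b) = (\<Sum>b\<in>S. (c b)^2)"
proof -
  have "inner (\<Sum>b\<in>S. c b *\<^sub>R g b) (\<Sum>b\<in>S. c b *\<^sub>R g b) = (\<Sum>b\<in>S. \<Sum>b'\<in>S. c b * c b' * inner (g b') (g b))"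
    by (simp add: inner_sum_left inner_sum_right sum_distrib_left mult.assoc)
  also have "\<dots> = (\<Sum>b\<in>S. \<Sum>b'\<in>S. if b' = b then c b * c b' else 0)"
    using assms(2) by (intro sum.cong refl) auto
  also have "\<dots> = (\<Sum>b\<in>S. (c b)^2)" using assms(1) by (simp add: power2_eq_square)
  finally show ?thesis .
qed

lemma orthonormal_expand:
  fixes S :: "'a::euclidean_space set"
  assumes "finite S" "\<And>b b'. b \<in> S \<Longrightarrow> b' \<in> S \<Longrightarrow> inner b b' = (if b = b' then 1 else 0)"
    "span S = UNIV"
  shows "z = (\<Sum>b\<in>S. inner z b *\<^sub>R b)"
proof -
  define v where "v = z - (\<Sum>b\<in>S. inner z b *\<^sub>R b)"
  have "inner b v = 0" if "b \<in> S" for b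
  proof -
    have "inner b (\<Sum>b'\<in>S. inner z b' *\<^sub>R b') = (\<Sum>b'\<in>S. if b' = b then inner z b else 0)"
      unfolding inner_sum_right using assms(2) that by (intro sum.cong refl) (auto simp: inner_commute)
    also have "\<dots> = inner z b" using assms(1) that by simp
    finally show ?thesis by (simp add: v_def inner_diff_right inner_commute)
  qed
  then have "S \<subseteq> {b. orthogonal v b}" by (auto simp: orthogonal_def inner_commute)
  then have "span S \<subseteq> {b. orthogonal v b}" by (intro span_minimal subspace_orthogonal_to_vector)
  then have "orthogonal v v" using assms(3) by auto
  then have "v = 0" by (simp add: orthogonal_def)
  then show ?thesis by (simp add: v_def)
qed

lemma basis_iso:
  fixes S :: "'z::euclidean_space set" and q :: "'z \<Rightarrow> 'a::real_inner"
  assumes "finite S" "\<And>b b'. b \<in> S \<Longrightarrow> b' \<in> S \<Longrightarrow> inner b b' = (if b = b' then 1 else 0)"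
    "span S = UNIV"
    "\<And>b b'. b \<in> S \<Longrightarrow> b' \<in> S \<Longrightarrow> inner (q b) (q b') = (if b = b' then 1 else 0)"
  shows "\<exists>P. lin_isometry P \<and> (\<forall>b\<in>S. P b = q b)"
proof -
  define P where "P z = (\<Sum>b\<in>S. inner z b *\<^sub>R q b)" for z
  have lin: "linear P"
    by (rule linearI) (simp_all add: P_def inner_add_left scaleR_add_left sum.distrib scaleR_sum_right)
  have "norm (P z) = norm z" for z
  proof -
    have "inner (P z) (P z) = (\<Sum>b\<in>S. (inner z b)^2)" unfolding P_def by (rule sum_orthonormal_sq[OF assms(1,4)])
    moreover have "inner z z = (\<Sum>b\<in>S. (inner z b)^2)"
      using sum_orthonormal_sq[of S id "inner z", OF assms(1)] assms(2) orthonormal_expand[OF assms(1-3), of z]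
      by simp
    ultimately show ?thesis by (metis norm_eq_sqrt_inner)
  qed
  moreover have "P b = q b" if "b \<in> S" for b
  proof -
    have "P b = (\<Sum>b'\<in>S. if b' = b then q b else 0)"
      unfolding P_def using assms(2) that by (intro sum.cong refl) (auto simp: inner_commute)
    then show ?thesis using assms(1) that by simp
  qed
  ultimately show ?thesis using lin by (auto simp: lin_isometry_def)
qed



lemma exists_orth_unit:
  fixes T S :: "'a::euclidean_space set"
  assumes "subspace T" "S \<subseteq> T" "dim S < dim T"
  obtains x where "x \<in> T" "norm x = 1" "\<And>y. y \<in> S \<Longrightarrow> inner x y = 0"
proof -
  have "span S \<subseteq> span T" using assms(2) by (rule span_mono)
  moreover have "span S \<noteq> span T" using assms(3) dim_span by (metis less_irrefl)
  ultimately have "span S \<subset> span T" by blast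
  then obtain x where x: "x \<noteq> 0" "x \<in> span T" "\<And>y. y \<in> span S \<Longrightarrow> orthogonal x y"
    using orthogonal_to_subspace_exists_gen by blast
  show ?thesis
  proof
    show "x /\<^sub>R norm x \<in> T" using x(2) assms(1) by (metis span_eq_iff subspace_scale)
    show "norm (x /\<^sub>R norm x) = 1" using x(1) by simp
    show "inner (x /\<^sub>R norm x) y = 0" if "y \<in> S" for y
      using x(3)[of y] that span_superset by (auto simp: orthogonal_def)
  qed
qed

context
  fixes \<nu> :: "'x::euclidean_space \<Rightarrow> 'z::euclidean_space \<Rightarrow> 'z" and eX :: 'x
  assumes ib: "isometric_bilinear \<nu>" and eXn: "norm eX = 1" and eXid: "\<And>z. \<nu> eX z = z"
begin

lemma bil: "bilinear \<nu>" using ib by (simp add: isometric_bilinear_def)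

lemma J_skew: assumes "inner x eX = 0" shows "inner (\<nu> x a) b = - inner a (\<nu> x b)"
  using ib_P3[OF ib, of x a eX b] assms by (simp add: eXid)

lemma J_inner: "inner (\<nu> x a) (\<nu> x b) = (norm x)^2 * inner a b"
  by (rule ib_P2[OF ib])

lemma J_sq: assumes "norm x = 1" "inner x eX = 0" shows "\<nu> x (\<nu> x a) = - a"
proof (rule inner_ext)
  fix z
  have "inner (\<nu> x (\<nu> x a)) z = - inner (\<nu> x a) (\<nu> x z)" by (rule J_skew[OF assms(2)])
  also have "\<dots> = - inner a z" using J_inner assms(1) by simp
  finally show "inner (\<nu> x (\<nu> x a)) z = inner (- a) z" by simp
qed

lemma J_anti: assumes "inner x eX = 0" "inner x' eX = 0" "inner x x' = 0"
  shows "\<nu> x (\<nu> x' a) = - \<nu> x' (\<nu> x a)"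
proof (rule inner_ext)
  fix z
  have "inner (\<nu> x (\<nu> x' a)) z = - inner (\<nu> x' a) (\<nu> x z)" by (rule J_skew[OF assms(1)])
  also have "\<dots> = inner (\<nu> x a) (\<nu> x' z)"
    using ib_P3[OF ib, of x' a x z] assms(3) by (simp add: inner_commute)
  also have "\<dots> = - inner (\<nu> x' (\<nu> x a)) z" using J_skew[OF assms(2), of "\<nu> x a" z] by simp
  finally show "inner (\<nu> x (\<nu> x' a)) z = inner (- \<nu> x' (\<nu> x a)) z" by simp
qed

lemma J_orth: assumes "inner x x' = 0" shows "inner (\<nu> x a) (\<nu> x' a) = 0"
  using ib_P3[OF ib, of x a x' a] assms by (simp add: inner_commute)

lemma J_self: assumes "inner x eX = 0" shows "inner (\<nu> x a) a = 0"
  using J_skew[OF assms, of a a] by (simp add: inner_commute)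

lemma core_from_basis:
  fixes P :: "'z \<Rightarrow> 'a::real_normed_vector" and m :: "'a \<Rightarrow> 'a \<Rightarrow> 'a"
  assumes "linear P" "P z0 = e" "e \<in> W" "subspace W" "bilinear m" "\<And>a. m e a = a"
    "span S = UNIV"
    "\<And>x. x \<in> S \<Longrightarrow> x \<noteq> eX \<Longrightarrow> P (\<nu> x z0) \<in> W \<and> (\<forall>z. P (\<nu> x z) = m (P (\<nu> x z0)) (P z))"
  shows "(\<forall>x. P (\<nu> x z0) \<in> W) \<and> (\<forall>x z. P (\<nu> x z) = m (P (\<nu> x z0)) (P z))"
proof -
  have S: "P (\<nu> x z0) \<in> W \<and> (\<forall>z. P (\<nu> x z) = m (P (\<nu> x z0)) (P z))" if "x \<in> S" for x
  proof (cases "x = eX")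
    case True
    then show ?thesis using assms(2,3,6) eXid by simp
  next
    case False
    then show ?thesis using assms(8)[OF that] by blast
  qed
  have lin1: "linear (\<lambda>x. P (\<nu> x z))" for z
    using linear_compose[of "\<lambda>x. \<nu> x z" P] bil assms(1) by (simp add: bilinear_def o_def)
  have lin2: "linear (\<lambda>x. m (P (\<nu> x z0)) (P z))" for z
    using linear_compose[of "\<lambda>x. P (\<nu> x z0)" "\<lambda>a. m a (P z)"] lin1[of z0] assms(5)
    by (simp add: bilinear_def o_def)
  have "S \<subseteq> (\<lambda>x. P (\<nu> x z0)) -` W" using S by auto
  then have "span S \<subseteq> (\<lambda>x. P (\<nu> x z0)) -` W"
    by (intro span_minimal linear_subspace_vimage lin1 assms(4))
  then have 1: "\<forall>x. P (\<nu> x z0) \<in> W" using assms(7) by auto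
  have "P (\<nu> x z) = m (P (\<nu> x z0)) (P z)" for x z
  proof (rule linear_eq_on_span[OF lin1[of z] lin2[of z], where B=S])
    show "x \<in> span S" using assms(7) by simp
    show "\<And>x. x \<in> S \<Longrightarrow> P (\<nu> x z) = m (P (\<nu> x z0)) (P z)" using S by blast
  qed
  with 1 show ?thesis by blast
qed

end

lemma assemble:
  fixes \<mu> :: "'x::euclidean_space \<Rightarrow> 'y::euclidean_space \<Rightarrow> 'z::euclidean_space"
    and m :: "'a::real_normed_vector \<Rightarrow> 'a \<Rightarrow> 'a"
  assumes ib: "isometric_bilinear \<mu>" and dims: "DIM('y) = DIM('z)"
    and eX: "norm eX = 1" and eY: "norm eY = 1"
    and core: "\<And>\<nu> z0::'z. isometric_bilinear \<nu> \<Longrightarrow> (\<forall>z. \<nu> eX z = z) \<Longrightarrow> norm z0 = 1 \<Longrightarrow>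
        \<exists>P. lin_isometry P \<and> P z0 = e \<and> (\<forall>x. P (\<nu> x z0) \<in> W) \<and> (\<forall>x z. P (\<nu> x z) = m (P (\<nu> x z0)) (P z))"
  shows "\<exists>\<phi>X \<phi>Y \<phi>Z. lin_isometry \<phi>X \<and> range \<phi>X \<subseteq> W \<and> lin_isometry \<phi>Y \<and> lin_isometry \<phi>Z \<and>
          (\<forall>x y. \<phi>Z (\<mu> x y) = m (\<phi>X x) (\<phi>Y y)) \<and> \<phi>X eX = e \<and> \<phi>Y eY = e"
proof -
  have b: "bilinear \<mu>" and n: "\<And>x y. norm (\<mu> x y) = norm x * norm y"
    using ib by (auto simp: isometric_bilinear_def)
  define L where "L = \<mu> eX"
  have Llin: "linear L" using b by (simp add: L_def bilinear_def)
  have Ln: "norm (L y) = norm y" for y using n eX by (simp add: L_def)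
  have "inj L"
  proof (rule injI)
    fix a b assume "L a = L b"
    then have "L (a - b) = 0" using linear_diff[OF Llin] by simp
    then show "a = b" using Ln[of "a-b"] by simp
  qed
  then obtain Li where Li: "linear Li" "\<And>y. Li (L y) = y" "\<And>z. L (Li z) = z"
    using linear_injective_isomorphism[OF Llin \<open>inj L\<close>] dims by (auto simp: dim_UNIV)
  have Lin: "norm (Li z) = norm z" for z by (metis Li(3) Ln)
  define \<nu> where "\<nu> x z = \<mu> x (Li z)" for x z
  have ibn: "isometric_bilinear \<nu>"
    unfolding isometric_bilinear_def bilinear_def \<nu>_def
  proof (intro conjI allI)
    fix x show "linear (\<lambda>z. \<mu> x (Li z))"
      using linear_compose[OF Li(1), of "\<mu> x"] b by (simp add: bilinear_def o_def)
  next
    fix z show "linear (\<lambda>x. \<mu> x (Li z))" using b by (simp add: bilinear_def)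
  next
    fix x z show "norm (\<mu> x (Li z)) = norm x * norm z" using n Lin by simp
  qed
  have nid: "\<forall>z. \<nu> eX z = z" using Li(3) by (simp add: \<nu>_def L_def)
  define z0 where "z0 = \<mu> eX eY"
  have z0n: "norm z0 = 1" using n eX eY by (simp add: z0_def)
  obtain P where P: "lin_isometry P" "P z0 = e" "\<And>x. P (\<nu> x z0) \<in> W" "\<And>x z. P (\<nu> x z) = m (P (\<nu> x z0)) (P z)"
    using core[OF ibn nid z0n] by blast
  have Liz0: "Li z0 = eY" using Li(2)[of eY] by (simp add: z0_def L_def)
  define \<phi>X where "\<phi>X x = P (\<nu> x z0)" for x
  define \<phi>Y where "\<phi>Y = P \<circ> L"
  have "lin_isometry \<phi>X"
    unfolding lin_isometry_def \<phi>X_def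
  proof (intro conjI allI)
    show "linear (\<lambda>x. P (\<nu> x z0))"
      using linear_compose[of "\<lambda>x. \<nu> x z0" P] ibn P(1)
      by (simp add: isometric_bilinear_def bilinear_def lin_isometry_def o_def)
    fix x show "norm (P (\<nu> x z0)) = norm x" using P(1) ibn z0n by (simp add: lin_isometry_def isometric_bilinear_def)
  qed
  moreover have "lin_isometry \<phi>Y" using P(1) Llin Ln
    by (simp add: \<phi>Y_def lin_isometry_def linear_compose)
  moreover have "\<phi>X eX = e" using nid P(2) by (simp add: \<phi>X_def)
  moreover have "\<phi>Y eY = e" using P(2) by (simp add: \<phi>Y_def L_def z0_def)
  moreover have "P (\<mu> x y) = m (\<phi>X x) (\<phi>Y y)" for x y
    using P(4)[of x "L y"] by (simp add: \<phi>X_def \<phi>Y_def \<nu>_def Li(2))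
  moreover have "range \<phi>X \<subseteq> W" using P(3) by (auto simp: \<phi>X_def)
  ultimately show ?thesis using P(1) by blast
qed



lemma a_from_b:
  fixes m :: "'a::euclidean_space \<Rightarrow> 'a \<Rightarrow> 'a" and \<mu> :: "'x::euclidean_space \<Rightarrow> 'y::euclidean_space \<Rightarrow> 'z::euclidean_space"
  assumes mb: "bilinear m" and mn: "\<And>a b. norm (m a b) = norm a * norm b"
    and assoc: "\<And>a b c. m (m a b) c = m a (m b c)" and eR: "\<And>a. m a e = a"
    and W: "subspace W" "dim W = DIM('x)"
    and nb: "\<And>W'. subspace W' \<Longrightarrow> dim W' = DIM('x) \<Longrightarrow> e \<in> W' \<Longrightarrow> factorizes_through_normalized m e \<mu> W'"
  shows "factorizes_through m \<mu> W"
proof -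
  have "dim ({}::'a set) < dim W" using W(2) by simp
  then obtain w where w: "w \<in> W" "norm w = 1" using exists_orth_unit[OF W(1), of "{}"] by blast
  define L where "L = m w"
  have Llin: "linear L" using mb by (simp add: L_def bilinear_def)
  have Ln: "norm (L a) = norm a" for a using mn w(2) by (simp add: L_def)
  have "inj L"
  proof (rule injI)
    fix a b assume "L a = L b"
    then have "L (a - b) = 0" using linear_diff[OF Llin] by simp
    then show "a = b" using Ln[of "a-b"] by simp
  qed
  then have "surj L" using Llin linear_injective_imp_surjective by blast
  define W' where "W' = L -` W"
  have sW': "subspace W'" unfolding W'_def by (rule linear_subspace_vimage[OF Llin W(1)])
  have eW': "e \<in> W'" using w(1) eR by (simp add: W'_def L_def)
  have "L ` W' = W" unfolding W'_def using \<open>surj L\<close> by (simp add: surj_image_vimage_eq)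
  moreover have "dim (L ` W') = dim W'"
    by (rule dim_image_eq[OF Llin]) (use \<open>inj L\<close> in \<open>auto simp: inj_on_def inj_def\<close>)
  ultimately have dW': "dim W' = DIM('x)" using W(2) by simp
  obtain eX :: 'x where eX: "norm eX = 1" using norm_Basis[OF SOME_Basis] by blast
  obtain eY :: 'y where eY: "norm eY = 1" using norm_Basis[OF SOME_Basis] by blast
  obtain \<phi>X \<phi>Y \<phi>Z where F: "lin_isometry \<phi>X" "range \<phi>X \<subseteq> W'" "lin_isometry \<phi>Y" "lin_isometry \<phi>Z"
     "\<And>x y. \<phi>Z (\<mu> x y) = m (\<phi>X x) (\<phi>Y y)"
    using nb[OF sW' dW' eW'] eX eY unfolding factorizes_through_normalized_def by blast
  have li: "lin_isometry (L \<circ> f)" if "lin_isometry f" for f :: "'b::real_normed_vector \<Rightarrow> 'a"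
    using that Llin Ln by (simp add: lin_isometry_def linear_compose)
  show ?thesis unfolding factorizes_through_def
  proof (intro exI conjI allI)
    show "lin_isometry (L \<circ> \<phi>X)" by (rule li[OF F(1)])
    show "range (L \<circ> \<phi>X) \<subseteq> W" using F(2) by (auto simp: W'_def)
    show "lin_isometry \<phi>Y" by (rule F(3))
    show "lin_isometry (L \<circ> \<phi>Z)" by (rule li[OF F(4)])
    fix x y show "(L \<circ> \<phi>Z) (\<mu> x y) = m ((L \<circ> \<phi>X) x) (\<phi>Y y)"
      by (simp add: F(5) L_def assoc)
  qed
qed



lemma P_exists:
  fixes m :: "'a::euclidean_space \<Rightarrow> 'a \<Rightarrow> 'a" and z0 :: "'z::euclidean_space"
  assumes "DIM('z) = DIM('a)" "norm z0 = 1" "bilinear m" "\<And>a b. norm (m a b) = norm a * norm b"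
    "norm e = 1" "\<And>a. norm a = 1 \<Longrightarrow> \<exists>a'. m a a' = e"
  shows "\<exists>P::'z \<Rightarrow> 'a. lin_isometry P \<and> P z0 = e"
proof -
  obtain f :: "'z \<Rightarrow> 'a" and g where f: "linear f" "\<And>x. norm (f x) = norm x"
    using isomorphisms_UNIV_UNIV[OF assms(1)] by metis
  obtain a' where a': "m (f z0) a' = e" using assms(6)[of "f z0"] f(2) assms(2) by auto
  have na: "norm a' = 1" using assms(4)[of "f z0" a'] a' assms(5) f(2) assms(2) by simp
  have "linear (\<lambda>v. m (f v) a')"
    using linear_compose[OF f(1), of "\<lambda>b. m b a'"] assms(3) by (simp add: bilinear_def o_def)
  moreover have "norm (m (f v) a') = norm v" for v using assms(4) f(2) na by simp
  ultimately show ?thesis using a' unfolding lin_isometry_def by blast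
qed

lemma core_d1:
  fixes \<nu> :: "'x::euclidean_space \<Rightarrow> 'z::euclidean_space \<Rightarrow> 'z" and P :: "'z \<Rightarrow> 'a::real_normed_vector"
  assumes "isometric_bilinear \<nu>" "\<forall>z. \<nu> eX z = z" "norm eX = 1" "DIM('x) = 1"
    "linear P" "P z0 = e" "e \<in> W" "subspace W" "bilinear m" "\<And>a. m e a = a"
  shows "(\<forall>x. P (\<nu> x z0) \<in> W) \<and> (\<forall>x z. P (\<nu> x z) = m (P (\<nu> x z0)) (P z))"
proof (rule core_from_basis[OF assms(1) assms(3) _ assms(5-10), where S="{eX}"])
  show "span {eX} = UNIV" using assms(3,4) by (intro orthonormal_span) auto
qed (use assms(2) in auto)

lemma norm_d1:
  fixes m :: "'a::euclidean_space \<Rightarrow> 'a \<Rightarrow> 'a" and \<mu> :: "'x::euclidean_space \<Rightarrow> 'y::euclidean_space \<Rightarrow> 'z::euclidean_space"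
  assumes ib: "isometric_bilinear \<mu>" and dims: "DIM('y) = DIM('z)" "DIM('z) = DIM('a)" "DIM('x) = 1"
    and mb: "bilinear m" and mn: "\<And>a b. norm (m a b) = norm a * norm b" and en: "norm e = 1"
    and eL: "\<And>a. m e a = a" and inv: "\<And>a. norm a = 1 \<Longrightarrow> \<exists>a'. m a a' = e"
    and W: "subspace W" "e \<in> W"
  shows "factorizes_through_normalized m e \<mu> W"
  unfolding factorizes_through_normalized_def
proof (intro allI impI, elim conjE)
  fix eX :: 'x and eY :: 'y assume eX: "norm eX = 1" and eY: "norm eY = 1"
  show "\<exists>\<phi>X \<phi>Y \<phi>Z. lin_isometry \<phi>X \<and> range \<phi>X \<subseteq> W \<and> lin_isometry \<phi>Y \<and> lin_isometry \<phi>Z \<and>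
          (\<forall>x y. \<phi>Z (\<mu> x y) = m (\<phi>X x) (\<phi>Y y)) \<and> \<phi>X eX = e \<and> \<phi>Y eY = e"
  proof (rule assemble[OF ib dims(1) eX eY])
    fix \<nu> :: "'x \<Rightarrow> 'z \<Rightarrow> 'z" and z0 :: 'z
    assume ibn: "isometric_bilinear \<nu>" and nid: "\<forall>z. \<nu> eX z = z" and z0: "norm z0 = 1"
    obtain P :: "'z \<Rightarrow> 'a" where P: "lin_isometry P" "P z0 = e"
      using P_exists[OF dims(2) z0 mb mn en inv] by blast
    show "\<exists>P. lin_isometry P \<and> P z0 = e \<and> (\<forall>x. P (\<nu> x z0) \<in> W) \<and> (\<forall>x z. P (\<nu> x z) = m (P (\<nu> x z0)) (P z))"
    proof -
      have lP: "linear P" using P(1) by (simp add: lin_isometry_def)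
      show ?thesis using P core_d1[OF ibn nid eX dims(3) lP P(2) W(2) W(1) mb eL] by blast
    qed
  qed
qed

lemma divalg_facts:
  fixes a b :: "'a::{real_normed_div_algebra}"
  shows "bilinear (\<lambda>a b::'a. a * b)" "norm (a * b) = norm a * norm b" "norm (1::'a) = 1" "1 * a = a"
    "norm a = 1 \<Longrightarrow> \<exists>a'. a * a' = 1"
  by (auto simp: bilinear_times norm_mult) (metis norm_zero zero_neq_one right_inverse)



lemma norm_from_core:
  fixes m :: "'a::real_normed_vector \<Rightarrow> 'a \<Rightarrow> 'a" and \<mu> :: "'x::euclidean_space \<Rightarrow> 'y::euclidean_space \<Rightarrow> 'z::euclidean_space"
  assumes ib: "isometric_bilinear \<mu>" and dims: "DIM('y) = DIM('z)"
    and core: "\<And>\<nu> z0 eX. isometric_bilinear (\<nu>::'x \<Rightarrow> 'z \<Rightarrow> 'z) \<Longrightarrow> (\<forall>z. \<nu> eX z = z) \<Longrightarrow> norm eX = 1 \<Longrightarrow> norm z0 = 1 \<Longrightarrow>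
        \<exists>P. lin_isometry P \<and> P z0 = e \<and> (\<forall>x. P (\<nu> x z0) \<in> W) \<and> (\<forall>x z. P (\<nu> x z) = m (P (\<nu> x z0)) (P z))"
  shows "factorizes_through_normalized m e \<mu> W"
  unfolding factorizes_through_normalized_def
proof (intro allI impI, elim conjE)
  fix eX :: 'x and eY :: 'y assume eX: "norm eX = 1" and eY: "norm eY = 1"
  show "\<exists>\<phi>X \<phi>Y \<phi>Z. lin_isometry \<phi>X \<and> range \<phi>X \<subseteq> W \<and> lin_isometry \<phi>Y \<and> lin_isometry \<phi>Z \<and>
          (\<forall>x y. \<phi>Z (\<mu> x y) = m (\<phi>X x) (\<phi>Y y)) \<and> \<phi>X eX = e \<and> \<phi>Y eY = e"
    by (rule assemble[OF ib dims eX eY]) (rule core, auto simp: eX)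
qed

lemma pair_orthonormal:
  assumes "inner a b = 0" "norm a = 1" "norm b = 1"
  shows "pairwise orthogonal {a, b}" "a \<noteq> b" "card {a, b} = 2"
proof -
  show "a \<noteq> b" using assms by (metis inner_eq_zero_iff norm_zero zero_neq_one)
  then show "card {a, b} = 2" by simp
  show "pairwise orthogonal {a, b}" using assms(1)
    by (auto simp: pairwise_insert orthogonal_def inner_commute)
qed

lemma W_full:
  fixes W :: "'a::euclidean_space set"
  assumes "subspace W" "dim W = DIM('a)" shows "W = UNIV"
  using assms dim_eq_full span_eq_iff by metis

lemma complex_core2:
  fixes \<nu> :: "'x::euclidean_space \<Rightarrow> 'z::euclidean_space \<Rightarrow> 'z"
  assumes ib: "isometric_bilinear \<nu>" and nid: "\<forall>z. \<nu> eX z = z" and eX: "norm eX = 1" and z0: "norm z0 = 1"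
    and dx: "DIM('x) = 2" and dz: "DIM('z) = 2"
  shows "\<exists>P::'z \<Rightarrow> complex. lin_isometry P \<and> P z0 = 1 \<and> (\<forall>x. P (\<nu> x z0) \<in> (UNIV::complex set)) \<and>
           (\<forall>x z. P (\<nu> x z) = P (\<nu> x z0) * P z)"
proof -
  have eXid: "\<And>z. \<nu> eX z = z" using nid by simp
  have "dim {eX} < dim (UNIV::'x set)" using dx eX by (auto simp: dim_UNIV)
  then obtain x1 where x1: "norm x1 = 1" "inner x1 eX = 0"
    using exists_orth_unit[OF subspace_UNIV, of "{eX}"] by blast
  define J where "J = \<nu> x1"
  have Jlin: "linear J" using bil[OF ib eX eXid] by (simp add: J_def bilinear_def)
  define a1 where "a1 = J z0"
  have a1: "inner a1 z0 = 0" "norm a1 = 1"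
    using J_self[OF ib eX eXid x1(2)] J_inner[OF ib eX eXid, of x1 z0 z0] x1 z0
    by (auto simp: a1_def J_def norm_eq_sqrt_inner power2_norm_eq_inner)
  have Ja1: "J a1 = - z0" using J_sq[OF ib eX eXid x1] by (simp add: a1_def J_def)
  note po = pair_orthonormal[OF a1(1) a1(2) z0]
  have spZ: "span {a1, z0} = UNIV" using po z0 a1 dz by (intro orthonormal_span) auto
  have ii: "inner a1 a1 = 1" "inner z0 z0 = 1" using a1 z0 by (simp_all add: power2_norm_eq_inner[symmetric])
  have o1: "\<And>b b'. b \<in> {a1, z0} \<Longrightarrow> b' \<in> {a1, z0} \<Longrightarrow> inner b b' = (if b = b' then 1 else 0)"
    using ii a1(1) po(2) by (auto simp: inner_commute)
  have o2: "\<And>b b'. b \<in> {a1, z0} \<Longrightarrow> b' \<in> {a1, z0} \<Longrightarrow>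
     inner (if b = z0 then 1 else \<i>) (if b' = z0 then 1 else \<i>) = (if b = b' then 1 else (0::real))"
    using po(2) by auto
  obtain P :: "'z \<Rightarrow> complex" where P: "lin_isometry P" "\<forall>b\<in>{a1, z0}. P b = (if b = z0 then 1 else \<i>)"
    using basis_iso[OF _ o1 spZ o2] by blast
  have Pz0: "P z0 = 1" and Pa1: "P a1 = \<i>" using P(2) po(2) by auto
  have lP: "linear P" using P(1) by (simp add: lin_isometry_def)
  note pox = pair_orthonormal[OF x1(2) x1(1) eX]
  have spX: "span {x1, eX} = UNIV" using pox x1 eX dx by (intro orthonormal_span) auto
  have Jeq: "P (J z) = \<i> * P z" for z
  proof (rule linear_eq_on_span[where B="{a1, z0}"])
    show "linear (\<lambda>z. P (J z))" using linear_compose[OF Jlin lP] by (simp add: o_def)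
    show "linear (\<lambda>z. \<i> * P z)" using lP by (simp add: linear_compose_scale_right linear_iff algebra_simps)
    show "z \<in> span {a1, z0}" using spZ by simp
    fix b assume "b \<in> {a1, z0}"
    then show "P (J b) = \<i> * P b"
      using Ja1 Pz0 Pa1 linear_neg[OF lP] by (auto simp: a1_def[symmetric])
  qed
  have "(\<forall>x. P (\<nu> x z0) \<in> (UNIV::complex set)) \<and> (\<forall>x z. P (\<nu> x z) = P (\<nu> x z0) * P z)"
  proof (rule core_from_basis[OF ib eX eXid lP Pz0 _ subspace_UNIV bilinear_times _ spX])
    fix x assume "x \<in> {x1, eX}" "x \<noteq> eX"
    then have "x = x1" by simp
    then show "P (\<nu> x z0) \<in> UNIV \<and> (\<forall>z. P (\<nu> x z) = P (\<nu> x z0) * P z)"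
      using Jeq[of z0] Jeq Pz0 by (simp add: J_def)
  qed auto
  then show ?thesis using P(1) Pz0 by blast
qed



lemma quad_orthonormal:
  fixes a b c d :: "'a::real_inner"
  assumes "inner a b = 0" "inner a c = 0" "inner a d = 0" "inner b c = 0" "inner b d = 0" "inner c d = 0"
    "inner a a = 1" "inner b b = 1" "inner c c = 1" "inner d d = 1"
  shows quad_on: "\<And>u v. u \<in> {a,b,c,d} \<Longrightarrow> v \<in> {a,b,c,d} \<Longrightarrow> inner u v = (if u = v then 1 else 0)"
    and quad_distinct: "a \<noteq> b" "a \<noteq> c" "a \<noteq> d" "b \<noteq> c" "b \<noteq> d" "c \<noteq> d"
    and quad_po: "pairwise orthogonal {a,b,c,d}"
    and quad_card: "card {a,b,c,d} = 4"
    and quad_norm: "\<And>u. u \<in> {a,b,c,d} \<Longrightarrow> norm u = 1"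
proof -
  show d: "a \<noteq> b" "a \<noteq> c" "a \<noteq> d" "b \<noteq> c" "b \<noteq> d" "c \<noteq> d" using assms by auto
  show "\<And>u v. u \<in> {a,b,c,d} \<Longrightarrow> v \<in> {a,b,c,d} \<Longrightarrow> inner u v = (if u = v then 1 else 0)"
    using assms d by (auto simp: inner_commute)
  then show "pairwise orthogonal {a,b,c,d}" by (auto simp: pairwise_def orthogonal_def)
  show "card {a,b,c,d} = 4" using d by simp
  show "\<And>u. u \<in> {a,b,c,d} \<Longrightarrow> norm u = 1" using assms by (auto simp: norm_eq_sqrt_inner)
qed

lemma quad_iso:
  fixes a b c d :: "'z::euclidean_space" and p q r s :: "'a::real_inner"
  assumes "inner a b = 0" "inner a c = 0" "inner a d = 0" "inner b c = 0" "inner b d = 0" "inner c d = 0"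
    "inner a a = 1" "inner b b = 1" "inner c c = 1" "inner d d = 1" "DIM('z) = 4"
  assumes "inner p q = 0" "inner p r = 0" "inner p s = 0" "inner q r = 0" "inner q s = 0" "inner r s = 0"
    "inner p p = 1" "inner q q = 1" "inner r r = 1" "inner s s = 1"
  shows "\<exists>P. lin_isometry P \<and> P a = p \<and> P b = q \<and> P c = r \<and> P d = s" "span {a,b,c,d} = UNIV"
proof -
  note Z = quad_orthonormal[OF assms(1-10)]
  note A = quad_orthonormal[OF assms(12-21)]
  show sp: "span {a,b,c,d} = UNIV" using Z(8,9,10) assms(11) by (intro orthonormal_span) auto
  define f where "f u = (if u = a then p else if u = b then q else if u = c then r else s)" for u
  have fv: "f a = p" "f b = q" "f c = r" "f d = s" using Z(2-7) by (auto simp: f_def)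
  have "\<And>u v. u \<in> {a,b,c,d} \<Longrightarrow> v \<in> {a,b,c,d} \<Longrightarrow> inner (f u) (f v) = (if u = v then 1 else 0)"
  proof -
    fix u v assume "u \<in> {a,b,c,d}" "v \<in> {a,b,c,d}"
    then have "f u \<in> {p,q,r,s}" "f v \<in> {p,q,r,s}" "(f u = f v) = (u = v)"
      using fv A(2-7) by auto
    then show "inner (f u) (f v) = (if u = v then 1 else 0)" using A(1) by metis
  qed
  then obtain P where "lin_isometry P" "\<forall>u\<in>{a,b,c,d}. P u = f u"
    using basis_iso[OF _ Z(1) sp] by blast
  then show "\<exists>P. lin_isometry P \<and> P a = p \<and> P b = q \<and> P c = r \<and> P d = s" using fv by auto
qed

lemma quatP:
  fixes J :: "'z::euclidean_space \<Rightarrow> 'z"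
  assumes dz: "DIM('z) = 4" and Jl: "linear J" and Jsq: "\<And>a. J (J a) = - a"
    and Jsk: "\<And>a b. inner (J a) b = - inner a (J b)"
    and z0: "inner z0 z0 = 1" and g: "inner g g = 1" "inner g z0 = 0" "inner g (J z0) = 0"
    and w: "inner w qone = 0" "inner w w = 1" and v: "inner v qone = 0" "inner v v = 1" and wv: "inner w v = 0"
  shows "\<exists>P. lin_isometry P \<and> P z0 = qone \<and> P (J z0) = w \<and> P g = v \<and> P (J g) = qmult w v \<and>
            (\<forall>z. P (J z) = qmult w (P z))"
    and "span {z0, J z0, g, J g} = UNIV"
    and "inner z0 (J z0) = 0" "inner z0 g = 0" "inner z0 (J g) = 0" "inner (J z0) g = 0"
    "inner (J z0) (J g) = 0" "inner g (J g) = 0" "inner z0 z0 = 1" "inner (J z0) (J z0) = 1"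
    "inner g g = 1" "inner (J g) (J g) = 1"
proof -
  have JJ: "inner (J a) (J b) = inner a b" for a b using Jsk[of a "J b"] Jsq by simp
  have Js: "inner (J a) a = 0" for a using Jsk[of a a] by (simp add: inner_commute)
  have zf: "inner z0 (J z0) = 0" "inner z0 g = 0" "inner z0 (J g) = 0" "inner (J z0) g = 0"
    "inner (J z0) (J g) = 0" "inner g (J g) = 0" "inner z0 z0 = 1" "inner (J z0) (J z0) = 1"
    "inner g g = 1" "inner (J g) (J g) = 1"
    using Js[of z0] Js[of g] g Jsk[of z0 g] JJ[of z0 g] z0 JJ[of z0 z0] JJ[of g g]
    by (auto simp: inner_commute)
  then show "inner z0 (J z0) = 0" "inner z0 g = 0" "inner z0 (J g) = 0" "inner (J z0) g = 0"
    "inner (J z0) (J g) = 0" "inner g (J g) = 0" "inner z0 z0 = 1" "inner (J z0) (J z0) = 1"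
    "inner g g = 1" "inner (J g) (J g) = 1" by auto
  have wvo: "inner (qmult w v) (qmult w v) = 1" using qinner_mult w v by simp
  have qf: "inner qone w = 0" "inner qone v = 0" "inner qone (qmult w v) = 0" "inner w v = 0"
    "inner w (qmult w v) = 0" "inner v (qmult w v) = 0" "inner qone qone = 1" "inner w w = 1"
    "inner v v = 1" "inner (qmult w v) (qmult w v) = 1"
    using qprod_orth0[OF w(1) v(1) wv] qprod_orth1[OF w(1) v(1) wv] qprod_orth2[OF w(1) v(1) wv]
      w v wv wvo qinner_one_one by (auto simp: inner_commute)
  obtain P where P: "lin_isometry P" "P z0 = qone" "P (J z0) = w" "P g = v" "P (J g) = qmult w v"
    using quad_iso(1)[OF zf dz qf] by blast
  show sp: "span {z0, J z0, g, J g} = UNIV" by (rule quad_iso(2)[OF zf dz qf])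
  have lP: "linear P" using P(1) by (simp add: lin_isometry_def)
  have "P (J z) = qmult w (P z)" for z
  proof (rule linear_eq_on_span[where B="{z0, J z0, g, J g}"])
    show "linear (\<lambda>z. P (J z))" using linear_compose[OF Jl lP] by (simp add: o_def)
    show "linear (\<lambda>z. qmult w (P z))"
    proof -
      have lw: "linear (qmult w)" using qmult_bilinear unfolding bilinear_def by blast
      show ?thesis using linear_compose[OF lP lw] by (simp add: o_def)
    qed
    show "z \<in> span {z0, J z0, g, J g}" using sp by simp
    fix b assume "b \<in> {z0, J z0, g, J g}"
    then consider "b = z0" | "b = J z0" | "b = g" | "b = J g" by blast
    then show "P (J b) = qmult w (P b)"
    proof cases
      case 1 then show ?thesis using P by (simp add: qone_right)
    next
      case 2 then show ?thesis using P by (simp add: Jsq linear_neg[OF lP] qsq[OF w])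
    next
      case 3 then show ?thesis using P by simp
    next
      case 4 then show ?thesis using P
        by (simp add: Jsq linear_neg[OF lP] qmult_assoc[symmetric] qsq[OF w] qmult_neg_left qone_left)
    qed
  qed
  then show "\<exists>P. lin_isometry P \<and> P z0 = qone \<and> P (J z0) = w \<and> P g = v \<and> P (J g) = qmult w v \<and>
            (\<forall>z. P (J z) = qmult w (P z))" using P by blast
qed



lemma exists_orth_unit2:
  fixes T :: "'a::euclidean_space set"
  assumes "subspace T" "a \<in> T" "b \<in> T" "dim {a,b} < dim T"
  obtains x where "x \<in> T" "norm x = 1" "inner x a = 0" "inner x b = 0"
proof -
  have "{a,b} \<subseteq> T" using assms by simp
  obtain x where "x \<in> T" "norm x = 1" "\<And>y. y \<in> {a,b} \<Longrightarrow> inner x y = 0"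
    using exists_orth_unit[OF assms(1) \<open>{a,b} \<subseteq> T\<close> assms(4)] by blast
  then show ?thesis using that by simp
qed

lemma exists_orth_unit3:
  fixes T :: "'a::euclidean_space set"
  assumes "subspace T" "a \<in> T" "b \<in> T" "c \<in> T" "dim {a,b,c} < dim T"
  obtains x where "x \<in> T" "norm x = 1" "inner x a = 0" "inner x b = 0" "inner x c = 0"
proof -
  have "{a,b,c} \<subseteq> T" using assms by simp
  obtain x where "x \<in> T" "norm x = 1" "\<And>y. y \<in> {a,b,c} \<Longrightarrow> inner x y = 0"
    using exists_orth_unit[OF assms(1) \<open>{a,b,c} \<subseteq> T\<close> assms(5)] by blast
  then show ?thesis using that by simp
qed

lemma quat_core:
  fixes \<nu> :: "'x::euclidean_space \<Rightarrow> 'z::euclidean_space \<Rightarrow> 'z" and W :: "quat set"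
  assumes ib: "isometric_bilinear \<nu>" and nid: "\<forall>z. \<nu> eX z = z" and eX: "norm eX = 1" and z0: "norm z0 = 1"
    and dx: "DIM('x) \<in> {2,3,4}" and dz: "DIM('z) = 4"
    and W: "subspace W" "dim W = DIM('x)" "qone \<in> W"
  shows "\<exists>P. lin_isometry P \<and> P z0 = qone \<and> (\<forall>x. P (\<nu> x z0) \<in> W) \<and> (\<forall>x z. P (\<nu> x z) = qmult (P (\<nu> x z0)) (P z))"
proof -
  have eXid: "\<And>z. \<nu> eX z = z" using nid by simp
  note bl = bil[OF ib eX eXid]
  have lin: "linear (\<nu> x)" for x using bl by (simp add: bilinear_def)
  have nneg: "\<nu> x (- a) = - \<nu> x a" for x a by (rule bilinear_rneg[OF bl])
  have nsc: "\<nu> x (c *\<^sub>R a) = c *\<^sub>R \<nu> x a" for x a c by (rule bilinear_rmul[OF bl])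
  have z0i: "inner z0 z0 = 1" using z0 by (simp add: power2_norm_eq_inner[symmetric])
  have unit_i: "inner u u = 1" if "norm u = 1" for u :: "'b::real_inner"
    using that by (simp add: power2_norm_eq_inner[symmetric])
  have "dim {eX} < dim (UNIV::'x set)" using dx eX by (auto simp: dim_UNIV)
  then obtain x1 where x1: "norm x1 = 1" "inner x1 eX = 0"
    using exists_orth_unit[OF subspace_UNIV, of "{eX}"] by blast
  have "dim {qone} < dim W" using W dx by (auto simp: qone_def)
  then obtain w1 where w1: "w1 \<in> W" "norm w1 = 1" "inner w1 qone = 0"
    using exists_orth_unit[OF W(1), of "{qone}"] W(3) by blast
  have w1i: "inner w1 w1 = 1" by (rule unit_i[OF w1(2)])
  have Jsq1: "\<nu> x1 (\<nu> x1 a) = - a" for a by (rule J_sq[OF ib eX eXid x1])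
  have Jsk1: "inner (\<nu> x1 a) b = - inner a (\<nu> x1 b)" for a b by (rule J_skew[OF ib eX eXid x1(2)])
  have lP_of: "linear P" if "lin_isometry P" for P :: "'z \<Rightarrow> quat" using that by (simp add: lin_isometry_def)
  have dUq: "dim (UNIV :: quat set) = 4" by (simp add: dim_UNIV)
  consider (d2) "DIM('x) = 2" | (d34) "DIM('x) \<ge> 3" using dx by auto
  then show ?thesis
  proof cases
    case d2
    have dlt1: "dim {qone, w1} < dim (UNIV :: quat set)" using dim_le2[of qone w1] dUq by linarith
    obtain v where v: "norm v = 1" "inner v qone = 0" "inner v w1 = 0"
      using exists_orth_unit2[OF subspace_UNIV UNIV_I UNIV_I dlt1] by metis
    have dlt2: "dim {z0, \<nu> x1 z0} < dim (UNIV :: 'z set)" using dim_le2[of z0 "\<nu> x1 z0"] dz by (simp add: dim_UNIV)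
    obtain g where g: "norm g = 1" "inner g z0 = 0" "inner g (\<nu> x1 z0) = 0"
      using exists_orth_unit2[OF subspace_UNIV UNIV_I UNIV_I dlt2] by metis
    obtain P where P: "lin_isometry P" "P z0 = qone" "\<forall>z. P (\<nu> x1 z) = qmult w1 (P z)"
    proof -
      have wv: "inner w1 v = 0" using v(3) by (simp add: inner_commute)
      show ?thesis using quatP(1)[OF dz lin Jsq1 Jsk1 z0i unit_i[OF g(1)] g(2) g(3) w1(3) w1i v(2) unit_i[OF v(1)] wv]
        that by blast
    qed
    note pox = pair_orthonormal[OF x1(2) x1(1) eX]
    have spX: "span {x1, eX} = UNIV" using pox x1 eX d2 by (intro orthonormal_span) auto
    have "(\<forall>x. P (\<nu> x z0) \<in> W) \<and> (\<forall>x z. P (\<nu> x z) = qmult (P (\<nu> x z0)) (P z))"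
    proof (rule core_from_basis[OF ib eX eXid lP_of[OF P(1)] P(2) W(3) W(1) qmult_bilinear qone_left spX])
      fix x assume "x \<in> {x1, eX}" "x \<noteq> eX"
      then have "x = x1" by simp
      then show "P (\<nu> x z0) \<in> W \<and> (\<forall>z. P (\<nu> x z) = qmult (P (\<nu> x z0)) (P z))"
        using P w1(1) by (simp add: qone_right)
    qed
    then show ?thesis using P by blast
  next
    case d34
    have dlt3: "dim {eX, x1} < dim (UNIV::'x set)" using dim_le2[of eX x1] d34 by (simp add: dim_UNIV)
    obtain x2 where x2: "norm x2 = 1" "inner x2 eX = 0" "inner x2 x1 = 0"
      using exists_orth_unit2[OF subspace_UNIV UNIV_I UNIV_I dlt3] by metis
    have dlt4: "dim {qone, w1} < dim W" using dim_le2[of qone w1] d34 W(2) by linarith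
    obtain w2 where w2: "w2 \<in> W" "norm w2 = 1" "inner w2 qone = 0" "inner w2 w1 = 0"
      using exists_orth_unit2[OF W(1) W(3) w1(1) dlt4] by metis
    have w2i: "inner w2 w2 = 1" by (rule unit_i[OF w2(2)])
    have w12: "inner w1 w2 = 0" using w2(4) by (simp add: inner_commute)
    have Jsq2: "\<nu> x2 (\<nu> x2 a) = - a" for a by (rule J_sq[OF ib eX eXid x2(1,2)])
    have anti21: "\<nu> x2 (\<nu> x1 a) = - \<nu> x1 (\<nu> x2 a)" for a by (rule J_anti[OF ib eX eXid x2(2) x1(2) x2(3)])
    have gi: "inner (\<nu> x2 z0) (\<nu> x2 z0) = 1" using J_inner[OF ib eX eXid, of x2 z0 z0] x2(1) z0i by simp
    have g2: "inner (\<nu> x2 z0) z0 = 0" by (rule J_self[OF ib eX eXid x2(2)])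
    have g3: "inner (\<nu> x2 z0) (\<nu> x1 z0) = 0" by (rule J_orth[OF ib eX eXid x2(3)])
    note QP = quatP[OF dz lin Jsq1 Jsk1 z0i gi g2 g3 w1(3) w1i w2(3) w2i w12]
    obtain P where P: "lin_isometry P" "P z0 = qone" "P (\<nu> x1 z0) = w1" "P (\<nu> x2 z0) = w2"
       "\<And>z. P (\<nu> x1 z) = qmult w1 (P z)"
      using QP(1) by blast
    have lP: "linear P" by (rule lP_of[OF P(1)])
    define B where "B = {z0, \<nu> x1 z0, \<nu> x2 z0, \<nu> x1 (\<nu> x2 z0)}"
    have spZ: "span B = UNIV" unfolding B_def by (rule QP(2))
    note QO = quad_orthonormal[OF QP(3-12)]
    have J2eq: "P (\<nu> x2 z) = qmult w2 (P z)" for z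
    proof (rule linear_eq_on_span[where B=B])
      show "linear (\<lambda>z. P (\<nu> x2 z))" using linear_compose[OF lin lP] by (simp add: o_def)
      show "linear (\<lambda>z. qmult w2 (P z))"
      proof -
        have lw: "linear (qmult w2)" using qmult_bilinear unfolding bilinear_def by blast
        show ?thesis using linear_compose[OF lP lw] by (simp add: o_def)
      qed
      show "z \<in> span B" using spZ by simp
      fix b assume "b \<in> B"
      then consider "b = z0" | "b = \<nu> x1 z0" | "b = \<nu> x2 z0" | "b = \<nu> x1 (\<nu> x2 z0)"
        unfolding B_def by blast
      then show "P (\<nu> x2 b) = qmult w2 (P b)"
        by cases (simp_all add: P(2,4,5) Jsq2 anti21 nneg linear_neg[OF lP] qone_right qmult_neg_right
          qanti[OF w1(3) w2(3) w12] qanti_left[OF w1(3) w2(3) w12] qsq[OF w2(3) w2i] qsq_left[OF w2(3) w2i])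
    qed
    consider (d3) "DIM('x) = 3" | (d4) "DIM('x) = 4" using dx d34 by auto
    then show ?thesis
    proof cases
      case d3
      have x12: "inner x1 x2 = 0" using x2(3) by (simp add: inner_commute)
      have po: "pairwise orthogonal {x1, x2, eX}"
        using x1 x2 by (auto simp: pairwise_insert orthogonal_def inner_commute)
      have "x1 \<noteq> x2" "x1 \<noteq> eX" "x2 \<noteq> eX" using x1 x2 eX
        by (metis inner_eq_zero_iff norm_zero zero_neq_one)+
      then have "card {x1, x2, eX} = 3" by simp
      then have spX: "span {x1, x2, eX} = UNIV" using po x1 x2 eX d3 by (intro orthonormal_span) auto
      have "(\<forall>x. P (\<nu> x z0) \<in> W) \<and> (\<forall>x z. P (\<nu> x z) = qmult (P (\<nu> x z0)) (P z))"
      proof (rule core_from_basis[OF ib eX eXid lP P(2) W(3) W(1) qmult_bilinear qone_left spX])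
        fix x assume "x \<in> {x1, x2, eX}" "x \<noteq> eX"
        then have "x = x1 \<or> x = x2" by simp
        then show "P (\<nu> x z0) \<in> W \<and> (\<forall>z. P (\<nu> x z) = qmult (P (\<nu> x z0)) (P z))"
          using P w1(1) w2(1) J2eq by (auto simp: qone_right)
      qed
      then show ?thesis using P by blast
    next
      case d4
      have dlt5: "dim {eX, x1, x2} < dim (UNIV::'x set)" using dim_le3[of eX x1 x2] d4 by (simp add: dim_UNIV)
      obtain x3 where x3: "norm x3 = 1" "inner x3 eX = 0" "inner x3 x1 = 0" "inner x3 x2 = 0"
        using exists_orth_unit3[OF subspace_UNIV UNIV_I UNIV_I UNIV_I dlt5] by metis
      have WU: "W = UNIV" using W_full[OF W(1)] W(2) d4 by simp
      have anti31: "\<nu> x3 (\<nu> x1 a) = - \<nu> x1 (\<nu> x3 a)" for a by (rule J_anti[OF ib eX eXid x3(2) x1(2) x3(3)])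
      have anti32: "\<nu> x3 (\<nu> x2 a) = - \<nu> x2 (\<nu> x3 a)" for a by (rule J_anti[OF ib eX eXid x3(2) x2(2) x3(4)])
      define s where "s = inner (\<nu> x3 z0) (\<nu> x1 (\<nu> x2 z0))"
      have c0: "inner (\<nu> x3 z0) z0 = 0" by (rule J_self[OF ib eX eXid x3(2)])
      have c1: "inner (\<nu> x3 z0) (\<nu> x1 z0) = 0" by (rule J_orth[OF ib eX eXid x3(3)])
      have c2: "inner (\<nu> x3 z0) (\<nu> x2 z0) = 0" by (rule J_orth[OF ib eX eXid x3(4)])
      have "\<nu> x3 z0 = (\<Sum>b\<in>B. inner (\<nu> x3 z0) b *\<^sub>R b)"
        using orthonormal_expand[OF _ QO(1) spZ[unfolded B_def]] by (simp add: B_def)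
      also have "\<dots> = s *\<^sub>R \<nu> x1 (\<nu> x2 z0)"
        unfolding B_def using QO(2-7) c0 c1 c2 by (simp add: s_def)
      finally have J3z0: "\<nu> x3 z0 = s *\<^sub>R \<nu> x1 (\<nu> x2 z0)" .
      have J3eq: "P (\<nu> x3 z) = qmult (P (\<nu> x3 z0)) (P z)" for z
      proof (rule linear_eq_on_span[where B=B])
        show "linear (\<lambda>z. P (\<nu> x3 z))" using linear_compose[OF lin lP] by (simp add: o_def)
        show "linear (\<lambda>z. qmult (P (\<nu> x3 z0)) (P z))"
        proof -
          have lw: "linear (qmult (P (\<nu> x3 z0)))" using qmult_bilinear unfolding bilinear_def by blast
          show ?thesis using linear_compose[OF lP lw] by (simp add: o_def)
        qed
        show "z \<in> span B" using spZ by simp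
        fix b assume "b \<in> B"
        then consider "b = z0" | "b = \<nu> x1 z0" | "b = \<nu> x2 z0" | "b = \<nu> x1 (\<nu> x2 z0)"
          unfolding B_def by blast
        then show "P (\<nu> x3 b) = qmult (P (\<nu> x3 z0)) (P b)"
          by cases (simp_all add: J3z0 P(2,5) J2eq Jsq1 Jsq2 anti21 anti31 anti32 nneg nsc linear_neg[OF lP]
            linear_cmul[OF lP] qone_right qmult_neg_right qmult_neg_left qmult_scale_left qmult_scale_right
            qmult_assoc qanti[OF w1(3) w2(3) w12] qanti_left[OF w1(3) w2(3) w12]
            qsq[OF w2(3) w2i] qsq_left[OF w2(3) w2i] qsq[OF w1(3) w1i] qsq_left[OF w1(3) w1i])
      qed
      have QX: "inner x1 x2 = 0" "inner x1 x3 = 0" "inner x1 eX = 0" "inner x2 x3 = 0" "inner x2 eX = 0"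
        "inner x3 eX = 0" "inner x1 x1 = 1" "inner x2 x2 = 1" "inner x3 x3 = 1" "inner eX eX = 1"
        using x1 x2 x3 eX unit_i by (simp_all add: inner_commute)
      note QXO = quad_orthonormal[OF QX]
      have spX: "span {x1, x2, x3, eX} = UNIV" using QXO(8,9,10) d4 by (intro orthonormal_span) auto
      have "(\<forall>x. P (\<nu> x z0) \<in> W) \<and> (\<forall>x z. P (\<nu> x z) = qmult (P (\<nu> x z0)) (P z))"
      proof (rule core_from_basis[OF ib eX eXid lP P(2) W(3) W(1) qmult_bilinear qone_left spX])
        fix x assume "x \<in> {x1, x2, x3, eX}" "x \<noteq> eX"
        then consider "x = x1" | "x = x2" | "x = x3" by blast
        then show "P (\<nu> x z0) \<in> W \<and> (\<forall>z. P (\<nu> x z) = qmult (P (\<nu> x z0)) (P z))"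
        proof cases
          case 1 then show ?thesis using P(3,5) WU by simp
        next
          case 2 then show ?thesis using P(4) J2eq WU by simp
        next
          case 3 then show ?thesis using J3eq WU by blast
        qed
      qed
      then show ?thesis using P by blast
    qed
  qed
qed



theorem mainTheorem11:
  fixes \<mu> :: "'x::euclidean_space \<Rightarrow> 'y::euclidean_space \<Rightarrow> 'z::euclidean_space"
  assumes "isometric_bilinear \<mu>"
    and "DIM('x) \<le> DIM('y)" and "DIM('y) = DIM('z)" and "DIM('y) \<in> {1, 2, 4}"
  shows
    "(DIM('y) = 1 \<longrightarrow>
       (\<forall>W :: real set. subspace W \<and> dim W = DIM('x) \<longrightarrow>
          factorizes_through (*) \<mu> W \<and> (1 \<in> W \<longrightarrow> factorizes_through_normalized (*) 1 \<mu> W))) \<and>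
     (DIM('y) = 2 \<longrightarrow>
       (\<forall>W :: complex set. subspace W \<and> dim W = DIM('x) \<longrightarrow>
          factorizes_through (*) \<mu> W \<and> (1 \<in> W \<longrightarrow> factorizes_through_normalized (*) 1 \<mu> W))) \<and>
     (DIM('y) = 4 \<longrightarrow>
       (\<forall>W :: quat set. subspace W \<and> dim W = DIM('x) \<longrightarrow>
          factorizes_through qmult \<mu> W \<and> (qone \<in> W \<longrightarrow> factorizes_through_normalized qmult qone \<mu> W)))"
proof -
  note ib = assms(1)
  have dpos: "DIM('x) \<ge> 1" using DIM_positive[where 'a='x] by linarith
  have R: "factorizes_through (*) \<mu> W \<and> (1 \<in> W \<longrightarrow> factorizes_through_normalized (*) 1 \<mu> W)"
    if k: "DIM('y) = 1" and W: "subspace (W::real set)" "dim W = DIM('x)" for W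
  proof -
    have dx: "DIM('x) = 1" using assms(2) k dpos by linarith
    have dz: "DIM('z) = DIM(real)" using assms(3) k by simp
    have nb: "factorizes_through_normalized (*) 1 \<mu> W'"
      if "subspace W'" "dim W' = DIM('x)" "(1::real) \<in> W'" for W'
      by (rule norm_d1[OF ib assms(3) dz dx divalg_facts(1) divalg_facts(2) divalg_facts(3) divalg_facts(4)
          divalg_facts(5) that(1) that(3)])
    have "factorizes_through (*) \<mu> W"
      by (rule a_from_b[OF bilinear_times norm_mult mult.assoc mult_1_right W nb])
    then show ?thesis using nb W by blast
  qed
  have C: "factorizes_through (*) \<mu> W \<and> (1 \<in> W \<longrightarrow> factorizes_through_normalized (*) 1 \<mu> W)"
    if k: "DIM('y) = 2" and W: "subspace (W::complex set)" "dim W = DIM('x)" for W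
  proof -
    have dz: "DIM('z) = DIM(complex)" using assms(3) k by simp
    have nb: "factorizes_through_normalized (*) 1 \<mu> W'"
      if W': "subspace W'" "dim W' = DIM('x)" "(1::complex) \<in> W'" for W'
    proof (cases "DIM('x) = 1")
      case True
      show ?thesis
        by (rule norm_d1[OF ib assms(3) dz True divalg_facts(1) divalg_facts(2) divalg_facts(3) divalg_facts(4)
          divalg_facts(5) W'(1) W'(3)])
    next
      case False
      then have dx: "DIM('x) = 2" using assms(2) k dpos by linarith
      have WU: "W' = UNIV" using W_full[OF W'(1)] W'(2) dx by simp
      show ?thesis
      proof (rule norm_from_core[OF ib assms(3)])
        fix \<nu> :: "'x \<Rightarrow> 'z \<Rightarrow> 'z" and z0 :: 'z and eX :: 'x
        assume "isometric_bilinear \<nu>" "\<forall>z. \<nu> eX z = z" "norm eX = 1" "norm z0 = 1"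
        have dz2: "DIM('z) = 2" using assms(3) k by simp
        from complex_core2[of \<nu> eX z0, OF \<open>isometric_bilinear \<nu>\<close> \<open>\<forall>z. \<nu> eX z = z\<close> \<open>norm eX = 1\<close> \<open>norm z0 = 1\<close> dx dz2]
        show "\<exists>P. lin_isometry P \<and> P z0 = 1 \<and> (\<forall>x. P (\<nu> x z0) \<in> W') \<and> (\<forall>x z. P (\<nu> x z) = P (\<nu> x z0) * P z)"
          using WU by simp
      qed
    qed
    have "factorizes_through (*) \<mu> W"
      by (rule a_from_b[OF bilinear_times norm_mult mult.assoc mult_1_right W nb])
    then show ?thesis using nb W by blast
  qed
  have Q: "factorizes_through qmult \<mu> W \<and> (qone \<in> W \<longrightarrow> factorizes_through_normalized qmult qone \<mu> W)"
    if k: "DIM('y) = 4" and W: "subspace (W::quat set)" "dim W = DIM('x)" for W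
  proof -
    have dz: "DIM('z) = DIM(quat)" using assms(3) k by simp
    have nq: "norm qone = 1" by (simp add: qone_def)
    have nb: "factorizes_through_normalized qmult qone \<mu> W'"
      if W': "subspace W'" "dim W' = DIM('x)" "qone \<in> W'" for W'
    proof (cases "DIM('x) = 1")
      case True
      show ?thesis
        by (rule norm_d1[OF ib assms(3) dz True qmult_bilinear qnorm_mult nq qone_left qright_inv W'(1) W'(3)])
    next
      case False
      then have dx: "DIM('x) \<in> {2,3,4}" using assms(2) k dpos by (simp; presburger)
      show ?thesis
      proof (rule norm_from_core[OF ib assms(3)])
        fix \<nu> :: "'x \<Rightarrow> 'z \<Rightarrow> 'z" and z0 :: 'z and eX :: 'x
        assume "isometric_bilinear \<nu>" "\<forall>z. \<nu> eX z = z" "norm eX = 1" "norm z0 = 1"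
        have dz4: "DIM('z) = 4" using assms(3) k by simp
        show "\<exists>P. lin_isometry P \<and> P z0 = qone \<and> (\<forall>x. P (\<nu> x z0) \<in> W') \<and> (\<forall>x z. P (\<nu> x z) = qmult (P (\<nu> x z0)) (P z))"
          using quat_core[OF \<open>isometric_bilinear \<nu>\<close> \<open>\<forall>z. \<nu> eX z = z\<close> \<open>norm eX = 1\<close> \<open>norm z0 = 1\<close> dx dz4 W']
          by simp
      qed
    qed
    have "factorizes_through qmult \<mu> W"
      by (rule a_from_b[OF qmult_bilinear qnorm_mult qmult_assoc qone_right W nb])
    then show ?thesis using nb W by blast
  qed
  show ?thesis using R C Q by blast
qed


end
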